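(* Let $S=\begin{pmatrix}A&B\\C&D\end{pmatrix}\in\mathrm{Sp}(d,\mathbb R)$. Then $\mathbb R^d=R(B)\oplus A(\ker(B))$.
   Context: $\mathrm{Sp}(d,\mathbb R)$ is the group of real $2d\times 2d$ matrices $S$ with $S^TJS=J$, $J=\begin{pmatrix}0_d&I_d\\-I_d&0_d\end{pmatrix}$, written in $d\times d$ blocks $A,B,C,D$. $R(B)$ is the range and $\ker(B)$ the kernel of $B$; $\oplus$ denotes a (not necessarily orthogonal) direct sum. *)

theory Defs
  imports "HOL-Analysis.Analysis"
begin

text \<open>Block matrix [[A,B],[C,D]] of size 2d x 2d, indexed by the finite sum type 'n + 'n
  (first summand = first d coordinates, second summand = last d coordinates).\<close>
definition block_mat ::
  "real^'n^'n \<Rightarrow> real^'n^'n \<Rightarrow> real^'n^'n \<Rightarrow> real^'n^'n \<Rightarrow> real^('n::finite + 'n)^('n + 'n)" where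
  "block_mat A B C D = (\<chi> i j. case i of
       Inl i' \<Rightarrow> (case j of Inl j' \<Rightarrow> A $ i' $ j' | Inr j' \<Rightarrow> B $ i' $ j')
     | Inr i' \<Rightarrow> (case j of Inl j' \<Rightarrow> C $ i' $ j' | Inr j' \<Rightarrow> D $ i' $ j'))"

definition symp_J :: "real^('n::finite + 'n)^('n + 'n)" where
  "symp_J = block_mat 0 (mat 1) (- mat 1) 0"

definition symplectic :: "real^('n::finite + 'n)^('n + 'n) \<Rightarrow> bool" where
  "symplectic S \<longleftrightarrow> transpose S ** symp_J ** S = symp_J"

definition mat_range :: "real^'n^'m \<Rightarrow> (real^'m) set" where
  "mat_range M = range (\<lambda>x. M *v x)"

definition mat_ker :: "real^'n^'m \<Rightarrow> (real^'n) set" where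
  "mat_ker M = {x. M *v x = 0}"

definition direct_sum_of :: "'a::real_vector set \<Rightarrow> 'a set \<Rightarrow> 'a set \<Rightarrow> bool" where
  "direct_sum_of V U W \<longleftrightarrow> subspace U \<and> subspace W \<and> U \<inter> W = {0} \<and>
      V = {u + w | u w. u \<in> U \<and> w \<in> W}"

end

theory Submission
  imports Defs
begin

lemma sdelta: "(\<Sum>x\<in>(UNIV::'n::finite set). (f x::real) * (if x = a then 1 else 0)) = f a"
proof -
  have "(\<Sum>x\<in>(UNIV::'n set). (f x::real) * (if x = a then 1 else 0)) = (\<Sum>x\<in>UNIV. if x = a then f x else 0)"
    by (rule sum.cong) auto
  then show ?thesis by simp
qed

lemma sum_Plus_UNIV: "(\<Sum>x\<in>(UNIV::('a::finite+'b::finite) set). f x) = (\<Sum>x\<in>UNIV. f (Inl x)) + (\<Sum>x\<in>UNIV. f (Inr x))"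
proof -
  have "(\<Sum>x\<in>(UNIV::('a+'b) set). f x) = (\<Sum>x\<in>(UNIV <+> UNIV). f x)" by simp
  also have "\<dots> = sum (f \<circ> Inl) UNIV + sum (f \<circ> Inr) UNIV" by (rule sum.Plus) auto
  finally show ?thesis by (simp add: comp_def)
qed

lemma entry:
  fixes S :: "real^('n::finite + 'n)^('n + 'n)"
  shows "(transpose S ** symp_J ** S) $ i $ j =
    (\<Sum>k\<in>UNIV. S$(Inl k)$i * S$(Inr k)$j - S$(Inr k)$i * S$(Inl k)$j)"
proof -
  have "(transpose S ** symp_J ** S) $ i $ j =
     (\<Sum>l\<in>UNIV. (\<Sum>k\<in>UNIV. S$k$i * symp_J$k$l) * S$l$j)"
    by (simp add: matrix_matrix_mult_def transpose_def)
  also have "\<dots> = (\<Sum>l\<in>UNIV. (case l of Inl l' \<Rightarrow> - S$(Inr l')$i | Inr l' \<Rightarrow> S$(Inl l')$i) * S$l$j)"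
  proof (rule sum.cong[OF refl])
    fix l :: "'n + 'n"
    have "(\<Sum>k\<in>UNIV. S$k$i * symp_J$k$l) = (case l of Inl l' \<Rightarrow> - S$(Inr l')$i | Inr l' \<Rightarrow> S$(Inl l')$i)"
      unfolding UNIV_Plus_UNIV[symmetric]
      by (subst sum.Plus) (auto simp: sum_negf sdelta symp_J_def block_mat_def mat_def split: sum.splits
            if_splits cong: if_cong)
    then show "(\<Sum>k\<in>UNIV. S$k$i * symp_J$k$l) * S$l$j = (case l of Inl l' \<Rightarrow> - S$(Inr l')$i | Inr l' \<Rightarrow> S$(Inl l')$i) * S$l$j"
      by simp
  qed
  also have "\<dots> = (\<Sum>k\<in>UNIV. S$(Inl k)$i * S$(Inr k)$j - S$(Inr k)$i * S$(Inl k)$j)"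
    by (simp add: sum_Plus_UNIV sum_subtractf sum_negf algebra_simps)
  finally show ?thesis .
qed


lemma symp_eqs:
  fixes A B C D :: "real^'n::finite^'n"
  assumes "symplectic (block_mat A B C D)"
  shows "transpose D ** A - transpose B ** C = mat 1" "transpose B ** D = transpose D ** B"
proof -
  let ?S = "block_mat A B C D"
  have E: "(transpose ?S ** symp_J ** ?S) $ i $ j = symp_J $ i $ j" for i j
    using assms unfolding symplectic_def by simp
  show "transpose D ** A - transpose B ** C = mat 1"
  proof (subst vec_eq_iff, intro allI, subst vec_eq_iff, intro allI)
    fix a b :: 'n
    have "(\<Sum>k\<in>UNIV. B$k$a * C$k$b - D$k$a * A$k$b) = - (if a = b then 1 else 0)"
      using E[of "Inr a" "Inl b"] unfolding entry by (simp add: block_mat_def symp_J_def mat_def)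
    then show "(transpose D ** A - transpose B ** C) $ a $ b = mat 1 $ a $ b"
      by (simp add: matrix_matrix_mult_def transpose_def mat_def sum_subtractf algebra_simps)
  qed
  show "transpose B ** D = transpose D ** B"
  proof (subst vec_eq_iff, intro allI, subst vec_eq_iff, intro allI)
    fix a b :: 'n
    have "(\<Sum>k\<in>UNIV. B$k$a * D$k$b - D$k$a * B$k$b) = 0"
      using E[of "Inr a" "Inr b"] unfolding entry by (simp add: block_mat_def symp_J_def mat_def)
    then show "(transpose B ** D) $ a $ b = (transpose D ** B) $ a $ b"
      by (simp add: matrix_matrix_mult_def transpose_def sum_subtractf algebra_simps)
  qed
qed


lemma ker_orth:
  fixes B :: "real^'n::finite^'n"
  assumes "B *v x = 0" "x = transpose B *v y"
  shows "x = 0"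
proof -
  have "x \<bullet> x = (y v* B) \<bullet> x" using assms(2) by simp
  also have "\<dots> = y \<bullet> (B *v x)" by (rule dot_lmul_matrix)
  also have "\<dots> = 0" using assms(1) by simp
  finally show ?thesis by simp
qed

theorem lemma3p4:
  fixes A B C D :: "real^'n::finite^'n"
  assumes "symplectic (block_mat A B C D)"
  shows "direct_sum_of (UNIV :: (real^'n) set) (mat_range B) ((\<lambda>x. A *v x) ` mat_ker B)"
proof -
  note E = symp_eqs[OF assms]
  have F1: "x = transpose D *v (A *v x) - transpose B *v (C *v x)" for x
  proof -
    have "(transpose D ** A - transpose B ** C) *v x = x" using E(1) by simp
    then show ?thesis by (simp add: matrix_vector_mult_diff_rdistrib matrix_vector_mul_assoc)
  qed
  have key: "x = 0" if "B *v x = 0" "A *v x = B *v z" for x z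
  proof (rule ker_orth[OF that(1)])
    have "x = transpose D *v (B *v z) - transpose B *v (C *v x)" using F1[of x] that(2) by simp
    also have "transpose D *v (B *v z) = transpose B *v (D *v z)"
      using E(2) by (simp add: matrix_vector_mul_assoc)
    finally show "x = transpose B *v (D *v z - C *v x)"
      by (simp add: matrix_vector_right_distrib matrix_vector_mult_diff_distrib)
  qed
  have subR: "subspace (mat_range B)"
    unfolding mat_range_def by (rule linear_subspace_image) (auto simp: subspace_UNIV)
  have subK: "subspace (mat_ker B)"
    unfolding mat_ker_def by (rule linear_subspace_kernel) simp
  have subAK: "subspace ((\<lambda>x. A *v x) ` mat_ker B)"
    by (rule linear_subspace_image[OF _ subK]) simp
  have inter: "mat_range B \<inter> (\<lambda>x. A *v x) ` mat_ker B = {0}"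
  proof (rule set_eqI, rule iffI)
    fix y assume "y \<in> mat_range B \<inter> (\<lambda>x. A *v x) ` mat_ker B"
    then obtain z x where "y = B *v z" "y = A *v x" "B *v x = 0"
      unfolding mat_range_def mat_ker_def by blast
    then show "y \<in> {0}" using key[of x z] by simp
  next
    fix y :: "real^'n" assume "y \<in> {0}"
    then show "y \<in> mat_range B \<inter> (\<lambda>x. A *v x) ` mat_ker B"
      using subR subAK by (auto simp: subspace_0)
  qed
  have dimAK: "dim ((\<lambda>x. A *v x) ` mat_ker B) = dim (mat_ker B)"
  proof (rule dim_image_eq)
    show "linear ((*v) A)" by simp
    show "inj_on ((*v) A) (span (mat_ker B))"
      unfolding span_eq_iff[THEN iffD2, OF subK]
    proof (rule inj_onI)
      fix x y assume "x \<in> mat_ker B" "y \<in> mat_ker B" "A *v x = A *v y"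
      then have "B *v (x - y) = 0" "A *v (x - y) = B *v 0"
        by (auto simp: mat_ker_def matrix_vector_mult_diff_distrib)
      then show "x = y" using key by fastforce
    qed
  qed
  have kerset: "{y \<in> UNIV. \<forall>x\<in>range (\<lambda>w. transpose B *v w). orthogonal x y} = mat_ker B"
  proof (rule set_eqI)
    fix y :: "real^'n"
    have "orthogonal (transpose B *v w) y \<longleftrightarrow> w \<bullet> (B *v y) = 0" for w
      by (simp add: orthogonal_def dot_lmul_matrix)
    then have "y \<in> {y \<in> UNIV. \<forall>x\<in>range (\<lambda>w. transpose B *v w). orthogonal x y} \<longleftrightarrow> (\<forall>w. w \<bullet> (B *v y) = 0)"
      by auto
    also have "\<dots> \<longleftrightarrow> B *v y = 0"
      by (metis inner_eq_zero_iff inner_zero_right)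
    finally show "y \<in> {y \<in> UNIV. \<forall>x\<in>range (\<lambda>w. transpose B *v w). orthogonal x y} \<longleftrightarrow> y \<in> mat_ker B"
      by (simp add: mat_ker_def)
  qed
  have subRT: "subspace (range (\<lambda>w. transpose B *v w))"
    by (rule linear_subspace_image[OF matrix_vector_mul_linear subspace_UNIV])
  have "dim (mat_ker B) + dim (range (\<lambda>w. transpose B *v w)) = dim (UNIV :: (real^'n) set)"
    using dim_subspace_orthogonal_to_vectors[OF subRT subspace_UNIV] kerset by simp
  moreover have "dim (range (\<lambda>w. transpose B *v w)) = dim (mat_range B)"
    unfolding mat_range_def using rank_dim_range[of B] rank_dim_range[of "transpose B"] rank_transpose[of B]
    by simp
  ultimately have dsum: "dim (mat_range B) + dim ((\<lambda>x. A *v x) ` mat_ker B) = dim (UNIV :: (real^'n) set)"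
    using dimAK by simp
  let ?V = "{u + w | u w. u \<in> mat_range B \<and> w \<in> (\<lambda>x. A *v x) ` mat_ker B}"
  have subV: "subspace ?V" by (rule subspace_sums[OF subR subAK])
  have "dim ?V = dim (UNIV :: (real^'n) set)"
    using dim_sums_Int[OF subR subAK] inter dsum by simp
  then have "?V = UNIV"
    using subspace_dim_equal[OF subV subspace_UNIV] by simp
  then show ?thesis
    unfolding direct_sum_of_def using subR subAK inter by simp
qed

end
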